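(* Assume the standing hypotheses in the context. In a front tracking solution, consider two adjacent jumps (jump vectors) $\sigma_i$ and $\sigma_j$ belonging to different families $i<j$, located at $x_i>x_j$, which interact, and let $\sigma_i'$, $\sigma_j'$ be the jump vectors of the outgoing $i$- and $j$-fronts after the interaction. Then $$\mathrm{span}\{\sigma_i,\sigma_j\}=\mathrm{span}\{\sigma_i',\sigma_j'\}.$$
   Context: Setting: $u_t+f(u)_x=0$ with $f:\Omega\to\mathbb{R}^n$ smooth, $\Omega\subseteq\mathbb{R}^n$ open, eigenvalues $\lambda_1<\dots<\lambda_n$ of $Df$ with right eigenvectors $r_i$. Standing assumptions: (H1) each field genuinely nonlinear ($r_i\bullet\lambda_i\neq0$) or linearly degenerate ($r_i\bullet\lambda_i\equiv0$); (H2) rarefaction curves form Riemann coordinates $w=(w_1,\dots,w_n)$ (only $w_i$ varies along $i$-rarefaction curves); (H3) shock and rarefaction curves coincide. $E=\{u\in\Omega:w_i(u)\in[a_i,b_i]\}$ compact, uniformly strictly hyperbolic; for $u^\pm\in E$ with $\omega_0=w(u^-)$, $\omega_i=(w_1(u^+),\dots,w_i(u^+),w_{i+1}(u^-),\dots,w_n(u^-))$ the vectors $r_i(u^-,u^+)$ (normalized $u(\omega_i)-u(\omega_{i-1})$, or $r_i(u(\omega_{i-1}))$ if $w_i$ does not jump) are assumed linearly independent. Front tracking solution with parameter $\nu$: piecewise constant solution with values in $E^\nu=\{u\in E:w_i(u)\in2^{-\nu}\mathbb{Z}\}$ obtained by solving each Riemann problem $[u^-,u^+]$ as the succession of simple problems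 $[u(\omega_{i-1}),u(\omega_i)]$ (contact discontinuity, shock with Rankine–Hugoniot speed, or rarefaction fronts with $w_i$-jump $2^{-\nu}$) and tracking interactions. A jump of family $i$ is a front across which only $w_i$ changes, identified with its jump vector $u(x+)-u(x-)$. *)

theory Defs
  imports "HOL-Analysis.Analysis"
begin

text \<open>C^k and C^infinity regularity on a set (derivatives taken at points of S;
  S will be open).  The k-th level asks for a Frechet derivative at every point
  whose directional derivatives are C^(k-1).\<close>
fun Ck_on :: "nat \<Rightarrow> 'a::real_normed_vector set \<Rightarrow> ('a \<Rightarrow> 'b::real_normed_vector) \<Rightarrow> bool" where
  "Ck_on 0 S g = continuous_on S g"
| "Ck_on (Suc k) S g =
     (\<exists>g'. (\<forall>x\<in>S. (g has_derivative g' x) (at x)) \<and> (\<forall>v. Ck_on k S (\<lambda>x. g' x v)))"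

definition smooth_on :: "'a::real_normed_vector set \<Rightarrow> ('a \<Rightarrow> 'b::real_normed_vector) \<Rightarrow> bool" where
  "smooth_on S g \<longleftrightarrow> (\<forall>k. Ck_on k S g)"

definition RTE :: "('v set) \<Rightarrow> ('v \<Rightarrow> (real, 'n::finite) vec) \<Rightarrow> (real, 'n) vec \<Rightarrow> (real, 'n) vec \<Rightarrow> 'v set" where
  "RTE \<Omega> w a b = {u \<in> \<Omega>. w u \<in> cbox a b}"

definition RTEnu :: "nat \<Rightarrow> ('v set) \<Rightarrow> ('v \<Rightarrow> (real, 'n::finite) vec) \<Rightarrow> (real, 'n) vec \<Rightarrow> (real, 'n) vec \<Rightarrow> 'v set" where
  "RTEnu \<nu> \<Omega> w a b = {u \<in> RTE \<Omega> w a b. \<forall>k. \<exists>z::int. w u $ k = of_int z / 2 ^ \<nu>}"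

definition omega_le :: "(real, 'n::{finite,linorder}) vec \<Rightarrow> (real, 'n) vec \<Rightarrow> 'n \<Rightarrow> (real, 'n) vec" where
  "omega_le wm wp i = (\<chi> k. if k \<le> i then wp $ k else wm $ k)"

definition omega_lt :: "(real, 'n::{finite,linorder}) vec \<Rightarrow> (real, 'n) vec \<Rightarrow> 'n \<Rightarrow> (real, 'n) vec" where
  "omega_lt wm wp i = (\<chi> k. if k < i then wp $ k else wm $ k)"

definition rvec :: "((real, 'n::{finite,linorder}) vec \<Rightarrow> (real, 'n) vec) \<Rightarrow> ('n \<Rightarrow> (real, 'n) vec \<Rightarrow> (real, 'n) vec)
     \<Rightarrow> (real, 'n) vec \<Rightarrow> (real, 'n) vec \<Rightarrow> 'n \<Rightarrow> (real, 'n) vec" where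
  "rvec uw r wm wp i =
     (if wp $ i \<noteq> wm $ i
      then (let d = uw (omega_le wm wp i) - uw (omega_lt wm wp i) in d /\<^sub>R norm d)
      else r i (uw (omega_lt wm wp i)))"

end

theory Submission
  imports Defs
begin


definition lin2 :: "'a::real_vector \<Rightarrow> 'a \<Rightarrow> bool" where
  "lin2 a c \<longleftrightarrow> (\<forall>\<alpha> \<beta>. \<alpha> *\<^sub>R a + \<beta> *\<^sub>R c = 0 \<longrightarrow> \<alpha> = 0 \<and> \<beta> = 0)"

lemma span2_iff: "x \<in> span {a, c} \<longleftrightarrow> (\<exists>\<alpha> \<beta>. x = \<alpha> *\<^sub>R a + \<beta> *\<^sub>R c)"
proof
  assume "x \<in> span {a, c}"
  then obtain k where "x - k *\<^sub>R a \<in> span {c}" unfolding span_breakdown_eq by blast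
  then obtain m where "x - k *\<^sub>R a = m *\<^sub>R c" unfolding span_singleton by auto
  then have "x = k *\<^sub>R a + m *\<^sub>R c" by (simp add: algebra_simps)
  then show "\<exists>\<alpha> \<beta>. x = \<alpha> *\<^sub>R a + \<beta> *\<^sub>R c" by blast
next
  assume "\<exists>\<alpha> \<beta>. x = \<alpha> *\<^sub>R a + \<beta> *\<^sub>R c"
  then obtain \<alpha> \<beta> where x: "x = \<alpha> *\<^sub>R a + \<beta> *\<^sub>R c" by blast
  have "\<alpha> *\<^sub>R a \<in> span {a, c}" by (intro span_scale span_base) simp
  moreover have "\<beta> *\<^sub>R c \<in> span {a, c}" by (intro span_scale span_base) simp
  ultimately show "x \<in> span {a, c}" unfolding x by (rule span_add)
qed

lemma lin2_nz: "lin2 a c \<Longrightarrow> a \<noteq> 0 \<and> c \<noteq> 0"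
proof -
  assume h: "lin2 a c"
  have "a \<noteq> 0"
  proof
    assume "a = 0" then have "1 *\<^sub>R a + 0 *\<^sub>R c = 0" by simp
    then show False using h[unfolded lin2_def, rule_format, of 1 0] by simp
  qed
  moreover have "c \<noteq> 0"
  proof
    assume "c = 0" then have "0 *\<^sub>R a + 1 *\<^sub>R c = 0" by simp
    then show False using h[unfolded lin2_def, rule_format, of 0 1] by simp
  qed
  ultimately show ?thesis by simp
qed

lemma indep_lin2:
  assumes "independent {u, v}" "u \<noteq> v" shows "lin2 u v"
  unfolding lin2_def
proof (intro allI impI)
  fix \<alpha> \<beta> :: real assume h: "\<alpha> *\<^sub>R u + \<beta> *\<^sub>R v = 0"
  have a: "\<alpha> = 0"
  proof (rule ccontr)
    assume "\<alpha> \<noteq> 0"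
    have e: "\<alpha> *\<^sub>R u = (- \<beta>) *\<^sub>R v" using h by (simp add: eq_neg_iff_add_eq_0)
    have "u = (1/\<alpha>) *\<^sub>R (\<alpha> *\<^sub>R u)" using \<open>\<alpha> \<noteq> 0\<close> by simp
    also have "\<dots> = (1/\<alpha>) *\<^sub>R ((- \<beta>) *\<^sub>R v)" using e by simp
    finally have "u \<in> span {v}" by (metis span_scale span_base singletonI)
    moreover have "{u, v} - {u} = {v}" using assms(2) by auto
    ultimately have "u \<in> span ({u, v} - {u})" by simp
    then show False using assms(1) unfolding dependent_def by blast
  qed
  have b: "\<beta> = 0"
  proof (rule ccontr)
    assume "\<beta> \<noteq> 0"
    have e: "\<beta> *\<^sub>R v = (- \<alpha>) *\<^sub>R u" using h by (simp add: eq_neg_iff_add_eq_0 add.commute)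
    have "v = (1/\<beta>) *\<^sub>R (\<beta> *\<^sub>R v)" using \<open>\<beta> \<noteq> 0\<close> by simp
    also have "\<dots> = (1/\<beta>) *\<^sub>R ((- \<alpha>) *\<^sub>R u)" using e by simp
    finally have "v \<in> span {u}" by (metis span_scale span_base singletonI)
    moreover have "{u, v} - {v} = {u}" using assms(2) by auto
    ultimately have "v \<in> span ({u, v} - {v})" by simp
    then show False using assms(1) unfolding dependent_def by blast
  qed
  show "\<alpha> = 0 \<and> \<beta> = 0" using a b by simp
qed

lemma lin2_normalize:
  assumes "lin2 (a /\<^sub>R norm a) (c /\<^sub>R norm c)" shows "lin2 a c"
proof -
  from lin2_nz[OF assms] have "a \<noteq> 0" "c \<noteq> 0" by auto
  show ?thesis unfolding lin2_def
  proof (intro allI impI)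
    fix \<alpha> \<beta> :: real assume h: "\<alpha> *\<^sub>R a + \<beta> *\<^sub>R c = 0"
    have "(\<alpha> * norm a) *\<^sub>R (a /\<^sub>R norm a) + (\<beta> * norm c) *\<^sub>R (c /\<^sub>R norm c) = 0"
    proof -
      have eq: "\<alpha> * norm a * inverse (norm a) = \<alpha>" "\<beta> * norm c * inverse (norm c) = \<beta>"
        using \<open>a \<noteq> 0\<close> \<open>c \<noteq> 0\<close> by auto
      show ?thesis using h by (simp only: scaleR_scaleR eq)
    qed
    then have "\<alpha> * norm a = 0 \<and> \<beta> * norm c = 0" using assms unfolding lin2_def by blast
    then show "\<alpha> = 0 \<and> \<beta> = 0" using \<open>a \<noteq> 0\<close> \<open>c \<noteq> 0\<close> by simp
  qed
qed

definition det3 :: "real \<Rightarrow> real \<Rightarrow> real \<Rightarrow> real \<Rightarrow> real \<Rightarrow> real \<Rightarrow> real \<Rightarrow> real \<Rightarrow> real \<Rightarrow> real" where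
  "det3 a11 a12 a13 a21 a22 a23 a31 a32 a33 =
     a11 * (a22 * a33 - a23 * a32) - a12 * (a21 * a33 - a23 * a31) + a13 * (a21 * a32 - a22 * a31)"

definition Dfun :: "'a::real_inner \<Rightarrow> 'a \<Rightarrow> 'a \<Rightarrow> 'a \<Rightarrow> 'a \<Rightarrow> 'a \<Rightarrow> real" where
  "Dfun z1 z2 z3 a c b = det3 (a \<bullet> z1) (c \<bullet> z1) (b \<bullet> z1) (a \<bullet> z2) (c \<bullet> z2) (b \<bullet> z2) (a \<bullet> z3) (c \<bullet> z3) (b \<bullet> z3)"

lemma Dfun_span: assumes "b \<in> span {a, c}" shows "Dfun z1 z2 z3 a c b = 0"
proof -
  obtain \<alpha> \<beta> where b: "b = \<alpha> *\<^sub>R a + \<beta> *\<^sub>R c" using assms unfolding span2_iff by blast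
  show ?thesis unfolding Dfun_def det3_def b inner_add_left inner_scaleR_left
    by algebra
qed

lemma Dfun_nz:
  fixes a1 c1 b1 :: "'a::real_inner"
  assumes "lin2 a1 c1" "b1 \<notin> span {a1, c1}"
  shows "\<exists>z1 z2 z3. Dfun z1 z2 z3 a1 c1 b1 \<noteq> 0"
proof -
  have a0: "a1 \<noteq> 0" using lin2_nz[OF assms(1)] by simp
  define z2 where "z2 = c1 - ((c1 \<bullet> a1) / (a1 \<bullet> a1)) *\<^sub>R a1"
  have z2a: "a1 \<bullet> z2 = 0" using a0 unfolding z2_def by (simp add: inner_diff_right inner_commute)
  have z20: "z2 \<noteq> 0"
  proof
    assume "z2 = 0"
    then have "(- ((c1 \<bullet> a1) / (a1 \<bullet> a1))) *\<^sub>R a1 + 1 *\<^sub>R c1 = 0" unfolding z2_def by simp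
    then show False using assms(1)[unfolded lin2_def, rule_format, of "- ((c1 \<bullet> a1) / (a1 \<bullet> a1))" 1] by simp
  qed
  have cz2: "c1 \<bullet> z2 = z2 \<bullet> z2"
  proof -
    have "c1 = z2 + ((c1 \<bullet> a1) / (a1 \<bullet> a1)) *\<^sub>R a1" unfolding z2_def by simp
    then have "c1 \<bullet> z2 = z2 \<bullet> z2 + ((c1 \<bullet> a1) / (a1 \<bullet> a1)) * (a1 \<bullet> z2)"
      by (metis inner_add_left inner_scaleR_left)
    then show ?thesis using z2a by simp
  qed
  define z3 where "z3 = b1 - ((b1 \<bullet> a1) / (a1 \<bullet> a1)) *\<^sub>R a1 - ((b1 \<bullet> z2) / (z2 \<bullet> z2)) *\<^sub>R z2"
  have z3a: "a1 \<bullet> z3 = 0" using a0 z2a unfolding z3_def by (simp add: inner_diff_right inner_commute)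
  have z3z2: "z2 \<bullet> z3 = 0" using z20 z2a unfolding z3_def
    by (simp add: inner_diff_right inner_commute)
  have z3c: "c1 \<bullet> z3 = 0"
  proof -
    have "c1 = z2 + ((c1 \<bullet> a1) / (a1 \<bullet> a1)) *\<^sub>R a1" unfolding z2_def by simp
    then have "c1 \<bullet> z3 = z2 \<bullet> z3 + ((c1 \<bullet> a1) / (a1 \<bullet> a1)) * (a1 \<bullet> z3)"
      by (metis inner_add_left inner_scaleR_left)
    then show ?thesis using z3a z3z2 by simp
  qed
  have z30: "z3 \<noteq> 0"
  proof
    assume "z3 = 0"
    then have "b1 = ((b1 \<bullet> a1) / (a1 \<bullet> a1) - (b1 \<bullet> z2) / (z2 \<bullet> z2) * ((c1 \<bullet> a1) / (a1 \<bullet> a1))) *\<^sub>R a1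
        + ((b1 \<bullet> z2) / (z2 \<bullet> z2)) *\<^sub>R c1"
      unfolding z3_def z2_def by (simp add: algebra_simps)
    then have "b1 \<in> span {a1, c1}" unfolding span2_iff by blast
    then show False using assms(2) by simp
  qed
  have bz3: "b1 \<bullet> z3 = z3 \<bullet> z3"
  proof -
    have "b1 = z3 + ((b1 \<bullet> a1) / (a1 \<bullet> a1)) *\<^sub>R a1 + ((b1 \<bullet> z2) / (z2 \<bullet> z2)) *\<^sub>R z2"
      unfolding z3_def by simp
    then have "b1 \<bullet> z3 = z3 \<bullet> z3 + ((b1 \<bullet> a1) / (a1 \<bullet> a1)) * (a1 \<bullet> z3) + ((b1 \<bullet> z2) / (z2 \<bullet> z2)) * (z2 \<bullet> z3)"
      by (metis inner_add_left inner_scaleR_left)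
    then show ?thesis using z3a z3z2 by simp
  qed
  have "Dfun a1 z2 z3 a1 c1 b1 = (a1 \<bullet> a1) * (z2 \<bullet> z2) * (z3 \<bullet> z3)"
    unfolding Dfun_def det3_def using z2a z3a z3c cz2 bz3 by simp
  moreover have "(a1 \<bullet> a1) * (z2 \<bullet> z2) * (z3 \<bullet> z3) \<noteq> 0" using a0 z20 z30 by simp
  ultimately show ?thesis by metis
qed

lemma nonplanar_open:
  fixes av cv bv :: "real \<Rightarrow> 'a::real_inner"
  assumes "continuous_on S av" "continuous_on S cv" "continuous_on S bv" "t1 \<in> S"
    "lin2 (av t1) (cv t1)" "bv t1 \<notin> span {av t1, cv t1}"
  shows "\<exists>d>0. \<forall>t\<in>S. dist t t1 < d \<longrightarrow> bv t \<notin> span {av t, cv t}"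
proof -
  obtain z1 z2 z3 where nz: "Dfun z1 z2 z3 (av t1) (cv t1) (bv t1) \<noteq> 0"
    using Dfun_nz[OF assms(5,6)] by blast
  let ?F = "\<lambda>t. Dfun z1 z2 z3 (av t) (cv t) (bv t)"
  have "continuous_on S ?F" unfolding Dfun_def det3_def
    using assms(1-3) by (intro continuous_intros)
  then have "continuous (at t1 within S) ?F" using assms(4) continuous_on_eq_continuous_within by blast
  then obtain d where d: "d > 0" "\<forall>t\<in>S. dist t t1 < d \<longrightarrow> dist (?F t) (?F t1) < \<bar>?F t1\<bar>"
    unfolding continuous_within_eps_delta using nz by (meson zero_less_abs_iff)
  show ?thesis
  proof (intro exI[of _ d] conjI ballI impI)
    fix t assume "t \<in> S" "dist t t1 < d"
    then have "dist (?F t) (?F t1) < \<bar>?F t1\<bar>" using d by blast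
    then have "?F t \<noteq> 0" by auto
    then show "bv t \<notin> span {av t, cv t}" using Dfun_span by blast
  qed (use d in auto)
qed



definition vupd :: "(real, 'n::finite) vec \<Rightarrow> 'n \<Rightarrow> real \<Rightarrow> (real, 'n) vec" where
  "vupd \<omega> k t = (\<chi> l. if l = k then t else \<omega> $ l)"

lemma eigen_dir:
  fixes w uw :: "(real, 'n::finite) vec \<Rightarrow> (real, 'n) vec"
  assumes "open \<Omega>" "u \<in> \<Omega>" "\<forall>u\<in>\<Omega>. uw (w u) = u"
    "(w has_derivative Dw) (at u)" "(uw has_derivative DU) (at (w u))"
    "\<forall>l. l \<noteq> k \<longrightarrow> Dw r $ l = 0" "r \<noteq> 0" "linear Dfu" "Dfu r = lam *\<^sub>R r"
  shows "DU (axis k 1) \<noteq> 0 \<and> Dfu (DU (axis k 1)) = lam *\<^sub>R DU (axis k 1)"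
proof -
  have d1: "((\<lambda>x. uw (w x)) has_derivative (\<lambda>x. DU (Dw x))) (at u)"
    using has_derivative_compose[OF assms(4) assms(5)] by simp
  have d2: "((\<lambda>x. uw (w x)) has_derivative (\<lambda>x. x)) (at u)"
    by (rule has_derivative_transform_within_open[OF has_derivative_ident assms(1) assms(2)])
       (use assms(3) in auto)
  have id: "(\<lambda>x. DU (Dw x)) = (\<lambda>x. x)" using has_derivative_unique[OF d1 d2] .
  have linDU: "linear DU" using has_derivative_bounded_linear[OF assms(5)] bounded_linear.linear by blast
  define c where "c = Dw r $ k"
  have Dwr: "Dw r = c *\<^sub>R axis k 1"
    unfolding c_def using assms(6) by (auto simp: vec_eq_iff axis_def)
  have r_eq: "r = c *\<^sub>R DU (axis k 1)"
  proof -
    have "r = DU (Dw r)" using fun_cong[OF id, of r] by simp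
    also have "\<dots> = c *\<^sub>R DU (axis k 1)" unfolding Dwr using linDU by (simp add: linear_scale)
    finally show ?thesis .
  qed
  have c0: "c \<noteq> 0" using r_eq assms(7) by auto
  have e: "DU (axis k 1) = (1/c) *\<^sub>R r" using r_eq c0 by simp
  show ?thesis
    using assms(7,8,9) c0 unfolding e by (simp add: linear_scale)
qed

lemma vupd_eq: "vupd \<omega> k t = \<omega> + (t - \<omega> $ k) *\<^sub>R axis k 1"
  by (auto simp: vec_eq_iff vupd_def axis_def)

lemma vupd_self: "vupd \<omega> k (\<omega> $ k) = \<omega>"
  by (auto simp: vec_eq_iff vupd_def)

lemma curve_speed:
  fixes uw :: "(real, 'n::finite) vec \<Rightarrow> (real, 'n) vec"
    and f :: "(real, 'n) vec \<Rightarrow> (real, 'n) vec"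
  assumes "a $ k < b $ k" "om $ k \<in> {a $ k .. b $ k}"
    "(uw has_derivative DU) (at om)" "(f has_derivative Dfu) (at (uw om))"
    "DU (axis k 1) \<noteq> 0" "Dfu (DU (axis k 1)) = lam *\<^sub>R DU (axis k 1)"
    "d > 0" "\<forall>t\<in>{a $ k .. b $ k}. dist t (om $ k) < d \<longrightarrow>
        f (uw (vupd om k t)) - s0 *\<^sub>R uw (vupd om k t) = f (uw om) - s0 *\<^sub>R uw om"
  shows "lam = s0"
proof -
  let ?e = "axis k (1::real) :: (real, 'n) vec"
  let ?t1 = "om $ k"
  let ?S = "{a $ k .. b $ k}"
  have dv: "((\<lambda>t. vupd om k t) has_derivative (\<lambda>h. h *\<^sub>R ?e)) (at ?t1 within ?S)"
    unfolding vupd_eq by (auto intro!: derivative_eq_intros)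
  have dU: "((\<lambda>t. uw (vupd om k t)) has_derivative (\<lambda>h. DU (h *\<^sub>R ?e))) (at ?t1 within ?S)"
    using has_derivative_compose[OF dv, of uw DU] assms(3) by (simp add: vupd_self)
  have dF: "((\<lambda>t. f (uw (vupd om k t))) has_derivative (\<lambda>h. Dfu (DU (h *\<^sub>R ?e)))) (at ?t1 within ?S)"
    using has_derivative_compose[OF dU, of f Dfu] assms(4) by (simp add: vupd_self)
  have dG: "((\<lambda>t. f (uw (vupd om k t)) - s0 *\<^sub>R uw (vupd om k t)) has_derivative
        (\<lambda>h. Dfu (DU (h *\<^sub>R ?e)) - s0 *\<^sub>R DU (h *\<^sub>R ?e))) (at ?t1 within ?S)"
    by (intro has_derivative_diff has_derivative_scaleR_right dF dU)
  have d0: "((\<lambda>t. f (uw (vupd om k t)) - s0 *\<^sub>R uw (vupd om k t)) has_derivative (\<lambda>h. 0)) (at ?t1 within ?S)"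
    apply (rule has_derivative_transform_within[OF has_derivative_const[of "f (uw om) - s0 *\<^sub>R uw om"] assms(7) assms(2)])
    using assms(8) by auto
  have eqf: "(\<lambda>h. Dfu (DU (h *\<^sub>R ?e)) - s0 *\<^sub>R DU (h *\<^sub>R ?e)) = (\<lambda>h. 0)"
    apply (rule frechet_derivative_unique_within_closed_interval[of "a $ k" "b $ k" ?t1])
    using assms(1,2) dG d0 by (auto simp: cbox_interval)
  have linDU: "linear DU" using has_derivative_bounded_linear[OF assms(3)] bounded_linear.linear by blast
  have "Dfu (DU (1 *\<^sub>R ?e)) - s0 *\<^sub>R DU (1 *\<^sub>R ?e) = 0" using fun_cong[OF eqf, of 1] by simp
  then have "(lam - s0) *\<^sub>R DU ?e = 0" using assms(6) by (simp add: algebra_simps)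
  then show ?thesis using assms(5) by simp
qed



lemma span2_eqI:
  assumes "x \<in> span {a, c}" "y \<in> span {a, c}" "a \<in> span {x, y}" "c \<in> span {x, y}"
  shows "span {x, y} = span {a, c}"
proof (rule subset_antisym)
  show "span {x, y} \<subseteq> span {a, c}" using assms(1,2) by (intro span_minimal) auto
  show "span {a, c} \<subseteq> span {x, y}" using assms(3,4) by (intro span_minimal) auto
qed

lemma cst_lemma:
  fixes F1 FA X1 XA :: "'a::real_vector"
  assumes "F1 - FA = s *\<^sub>R (X1 - XA)"
  shows "F1 - s *\<^sub>R X1 = FA - s *\<^sub>R XA"
proof -
  have "F1 - s *\<^sub>R X1 = (F1 - FA) - s *\<^sub>R (X1 - XA) + (FA - s *\<^sub>R XA)"
    by (simp add: algebra_simps)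
  then show ?thesis using assms by simp
qed

theorem lemma3p5:
  fixes f :: "(real, 'n::{finite,linorder}) vec \<Rightarrow> (real, 'n) vec"
    and Df :: "(real, 'n) vec \<Rightarrow> (real, 'n) vec \<Rightarrow> (real, 'n) vec"
    and \<Omega> :: "((real, 'n) vec) set"
    and lam :: "'n \<Rightarrow> (real, 'n) vec \<Rightarrow> real"
    and Dlam :: "'n \<Rightarrow> (real, 'n) vec \<Rightarrow> (real, 'n) vec \<Rightarrow> real"
    and r :: "'n \<Rightarrow> (real, 'n) vec \<Rightarrow> (real, 'n) vec"
    and w :: "(real, 'n) vec \<Rightarrow> (real, 'n) vec"
    and Dw :: "(real, 'n) vec \<Rightarrow> (real, 'n) vec \<Rightarrow> (real, 'n) vec"
    and uw :: "(real, 'n) vec \<Rightarrow> (real, 'n) vec"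
    and a b :: "(real, 'n) vec"
    and \<nu> :: nat
    and ul um ur :: "(real, 'n) vec"
    and i j :: 'n
  assumes open_\<Omega>: "open \<Omega>"
    and f_smooth: "smooth_on \<Omega> f"
    and f_deriv: "\<forall>u\<in>\<Omega>. (f has_derivative Df u) (at u)"
    and lam_smooth: "\<forall>k. smooth_on \<Omega> (lam k)"
    and r_smooth: "\<forall>k. smooth_on \<Omega> (r k)"
    and eigen: "\<forall>k. \<forall>u\<in>\<Omega>. r k u \<noteq> 0 \<and> Df u (r k u) = lam k u *\<^sub>R r k u"
    and strict_hyp: "\<forall>k l. \<forall>u\<in>\<Omega>. k < l \<longrightarrow> lam k u < lam l u"
    and lam_deriv: "\<forall>k. \<forall>u\<in>\<Omega>. (lam k has_derivative Dlam k u) (at u)"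
    and H1: "\<forall>k. (\<forall>u\<in>\<Omega>. Dlam k u (r k u) \<noteq> 0) \<or> (\<forall>u\<in>\<Omega>. Dlam k u (r k u) = 0)"
    and w_smooth: "smooth_on \<Omega> w"
    and uw_smooth: "smooth_on (w ` \<Omega>) uw"
    and uw_w: "\<forall>u\<in>\<Omega>. uw (w u) = u"
    and w_uw: "\<forall>\<omega>\<in>w ` \<Omega>. w (uw \<omega>) = \<omega>"
    and w_deriv: "\<forall>u\<in>\<Omega>. (w has_derivative Dw u) (at u)"
    and H2: "\<forall>k l. \<forall>u\<in>\<Omega>. l \<noteq> k \<longrightarrow> Dw u (r k u) $ l = 0"
    and box: "cbox a b \<subseteq> w ` \<Omega>"
    and E_compact: "compact (RTE \<Omega> w a b)"
    and H3: "\<forall>k. \<forall>\<omega>m\<in>cbox a b. \<forall>\<omega>p\<in>cbox a b. (\<forall>l. l \<noteq> k \<longrightarrow> \<omega>p $ l = \<omega>m $ l) \<longrightarrow>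
               (\<exists>s::real. f (uw \<omega>p) - f (uw \<omega>m) = s *\<^sub>R (uw \<omega>p - uw \<omega>m))"
    and unif_hyp: "\<exists>c>0. \<forall>u\<in>RTE \<Omega> w a b. \<forall>k l. k < l \<longrightarrow> lam l u - lam k u \<ge> c"
    and indep: "\<forall>u1\<in>RTE \<Omega> w a b. \<forall>u2\<in>RTE \<Omega> w a b.
                  independent (range (rvec uw r (w u1) (w u2))) \<and> inj (rvec uw r (w u1) (w u2))"
    and states: "ul \<in> RTEnu \<nu> \<Omega> w a b" "um \<in> RTEnu \<nu> \<Omega> w a b" "ur \<in> RTEnu \<nu> \<Omega> w a b"
    and ij: "i < j"
    and jump_j: "\<forall>l. l \<noteq> j \<longrightarrow> w um $ l = w ul $ l" "w um $ j \<noteq> w ul $ j"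
    and jump_i: "\<forall>l. l \<noteq> i \<longrightarrow> w ur $ l = w um $ l" "w ur $ i \<noteq> w um $ i"
  shows "span {um - ul, ur - um} =
         span {uw (omega_le (w ul) (w ur) i) - ul, ur - uw (omega_le (w ul) (w ur) i)}"
  
proof -
  define \<omega>0 where "\<omega>0 = w ul"
  define x0 where "x0 = \<omega>0 $ i"
  define y0 where "y0 = \<omega>0 $ j"
  define x1 where "x1 = w ur $ i"
  define y1 where "y1 = w ur $ j"
  define W where "W = (\<lambda>x y. (\<chi> l. if l = i then x else if l = j then (y::real) else \<omega>0 $ l))"
  define P where "P = (\<lambda>x y. uw (W x y))"
  define Si where "Si = {a $ i .. b $ i}"
  define Sj where "Sj = {a $ j .. b $ j}"
  define A where "A = ul"
  have ji: "j \<noteq> i" using ij by simp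
  have Wc: "\<And>x y l. W x y $ l = (if l = i then x else if l = j then y else \<omega>0 $ l)"
    unfolding W_def by simp
  have RTE_iff: "\<And>u. u \<in> RTE \<Omega> w a b \<longleftrightarrow> u \<in> \<Omega> \<and> w u \<in> cbox a b" unfolding RTE_def by simp
  have ulE: "ul \<in> RTE \<Omega> w a b" and umE: "um \<in> RTE \<Omega> w a b" and urE: "ur \<in> RTE \<Omega> w a b"
    using states unfolding RTEnu_def by auto
  have \<omega>0box: "\<omega>0 \<in> cbox a b" using ulE unfolding \<omega>0_def RTE_iff by simp
  have urbox: "w ur \<in> cbox a b" using urE unfolding RTE_iff by simp
  have boxfacts: "\<And>\<omega>. \<omega> \<in> cbox a b \<Longrightarrow> uw \<omega> \<in> \<Omega> \<and> w (uw \<omega>) = \<omega>"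
  proof -
    fix \<omega> assume "\<omega> \<in> cbox a b"
    then obtain u where "u \<in> \<Omega>" "\<omega> = w u" using box by auto
    then show "uw \<omega> \<in> \<Omega> \<and> w (uw \<omega>) = \<omega>" using uw_w by auto
  qed
  have x0S: "x0 \<in> Si" and y0S: "y0 \<in> Sj" using \<omega>0box unfolding x0_def y0_def Si_def Sj_def mem_box_cart by auto
  have x1S: "x1 \<in> Si" and y1S: "y1 \<in> Sj" using urbox unfolding x1_def y1_def Si_def Sj_def mem_box_cart by auto
  have Wbox: "\<And>x y. x \<in> Si \<Longrightarrow> y \<in> Sj \<Longrightarrow> W x y \<in> cbox a b"
    using \<omega>0box unfolding Si_def Sj_def mem_box_cart Wc by auto
  have PE: "\<And>x y. x \<in> Si \<Longrightarrow> y \<in> Sj \<Longrightarrow> P x y \<in> RTE \<Omega> w a b \<and> w (P x y) = W x y \<and> P x y \<in> \<Omega>"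
    unfolding P_def RTE_iff using Wbox boxfacts by auto
  have wum: "w um = W x0 y1"
    using jump_j(1) jump_i(1) ji unfolding vec_eq_iff Wc x0_def y1_def \<omega>0_def by auto
  have wur: "w ur = W x1 y1"
    using jump_j(1) jump_i(1) ji unfolding vec_eq_iff Wc x1_def y1_def \<omega>0_def by auto
  have W00: "W x0 y0 = \<omega>0" unfolding vec_eq_iff Wc x0_def y0_def by auto
  have A_eq: "A = P x0 y0" unfolding A_def P_def W00 \<omega>0_def using ulE uw_w unfolding RTE_iff by simp
  have um_eq: "um = P x0 y1" unfolding P_def wum[symmetric] using umE uw_w unfolding RTE_iff by simp
  have ur_eq: "ur = P x1 y1" unfolding P_def wur[symmetric] using urE uw_w unfolding RTE_iff by simp
  have us_eq: "uw (omega_le (w ul) (w ur) i) = P x1 y0"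
  proof -
    have "omega_le (w ul) (w ur) i = W x1 y0"
      unfolding wur \<omega>0_def[symmetric] omega_le_def vec_eq_iff using ij
      by (auto simp: Wc y0_def)
    then show ?thesis unfolding P_def by simp
  qed
  have x01: "x0 \<noteq> x1" using jump_i(2) jump_j(1) ji unfolding x0_def x1_def \<omega>0_def by auto
  have y01: "y0 \<noteq> y1" using jump_j(2) jump_i(1) ji unfolding y0_def y1_def \<omega>0_def by auto
  have pair: "\<And>xm xp ym yp. xm \<in> Si \<Longrightarrow> xp \<in> Si \<Longrightarrow> ym \<in> Sj \<Longrightarrow> yp \<in> Sj \<Longrightarrow> xm \<noteq> xp \<Longrightarrow> ym \<noteq> yp \<Longrightarrow>
      lin2 (P xp ym - P xm ym) (P xp yp - P xp ym)"
  proof -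
    fix xm xp ym yp assume h: "xm \<in> Si" "xp \<in> Si" "ym \<in> Sj" "yp \<in> Sj" "xm \<noteq> xp" "ym \<noteq> yp"
    let ?rv = "rvec uw r (W xm ym) (W xp yp)"
    have ind: "independent (range ?rv) \<and> inj ?rv"
      using indep PE[OF h(1,3)] PE[OF h(2,4)] by metis
    have le_i: "omega_le (W xm ym) (W xp yp) i = W xp ym"
      unfolding omega_le_def vec_eq_iff using ij by (auto simp: Wc)
    have lt_i: "omega_lt (W xm ym) (W xp yp) i = W xm ym"
      unfolding omega_lt_def vec_eq_iff using ij by (auto simp: Wc)
    have le_j: "omega_le (W xm ym) (W xp yp) j = W xp yp"
      unfolding omega_le_def vec_eq_iff using ij by (auto simp: Wc)
    have lt_j: "omega_lt (W xm ym) (W xp yp) j = W xp ym"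
      unfolding omega_lt_def vec_eq_iff using ij by (auto simp: Wc)
    have rvi: "?rv i = (P xp ym - P xm ym) /\<^sub>R norm (P xp ym - P xm ym)"
      unfolding rvec_def le_i lt_i P_def using h(5) by (simp add: Wc Let_def)
    have rvj: "?rv j = (P xp yp - P xp ym) /\<^sub>R norm (P xp yp - P xp ym)"
      unfolding rvec_def le_j lt_j P_def using h(6) ji by (simp add: Wc Let_def)
    have "independent {?rv i, ?rv j}" using ind by (rule independent_mono[OF conjunct1]) auto
    moreover have "?rv i \<noteq> ?rv j" using ind ij unfolding inj_def by auto
    ultimately have "lin2 (?rv i) (?rv j)" by (rule indep_lin2)
    then show "lin2 (P xp ym - P xm ym) (P xp yp - P xp ym)" unfolding rvi rvj by (rule lin2_normalize)
  qed

  obtain DU where DU: "\<forall>\<omega>\<in>w ` \<Omega>. (uw has_derivative DU \<omega>) (at \<omega>)"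
    using uw_smooth unfolding smooth_on_def by (metis Ck_on.simps(2))
  have uwcont: "continuous_on (cbox a b) uw"
  proof (intro continuous_at_imp_continuous_on ballI)
    fix x assume "x \<in> cbox a b"
    then have "x \<in> w ` \<Omega>" using box by blast
    then show "isCont uw x" using DU has_derivative_continuous by blast
  qed
  have Pcx: "\<And>y. y \<in> Sj \<Longrightarrow> continuous_on Si (\<lambda>x. P x y)"
  proof -
    fix y assume y: "y \<in> Sj"
    have e: "\<And>x. W x y = W 0 y + x *\<^sub>R axis i 1" unfolding vec_eq_iff by (auto simp: Wc axis_def)
    have ee: "(\<lambda>x. W x y) = (\<lambda>x. W 0 y + x *\<^sub>R axis i 1)" by (rule ext) (rule e)
    have "continuous_on Si (\<lambda>x. W 0 y + x *\<^sub>R axis i 1)" by (intro continuous_intros)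
    then have "continuous_on Si (\<lambda>x. W x y)" by (subst ee)
    then show "continuous_on Si (\<lambda>x. P x y)" unfolding P_def
      using continuous_on_compose2[OF uwcont] Wbox y by blast
  qed
  have Pcy: "\<And>x. x \<in> Si \<Longrightarrow> continuous_on Sj (\<lambda>y. P x y)"
  proof -
    fix x assume x: "x \<in> Si"
    have e: "\<And>y. W x y = W x 0 + y *\<^sub>R axis j 1" unfolding vec_eq_iff using ji by (auto simp: Wc axis_def)
    have ee: "(\<lambda>y. W x y) = (\<lambda>y. W x 0 + y *\<^sub>R axis j 1)" by (rule ext) (rule e)
    have "continuous_on Sj (\<lambda>y. W x 0 + y *\<^sub>R axis j 1)" by (intro continuous_intros)
    then have "continuous_on Sj (\<lambda>y. W x y)" by (subst ee)
    then show "continuous_on Sj (\<lambda>y. P x y)" unfolding P_def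
      using continuous_on_compose2[OF uwcont] Wbox x by blast
  qed
  have H3i: "\<And>x x' y. x \<in> Si \<Longrightarrow> x' \<in> Si \<Longrightarrow> y \<in> Sj \<Longrightarrow> \<exists>s. f (P x' y) - f (P x y) = s *\<^sub>R (P x' y - P x y)"
  proof -
    fix x x' y assume h: "x \<in> Si" "x' \<in> Si" "y \<in> Sj"
    have "\<forall>l. l \<noteq> i \<longrightarrow> W x' y $ l = W x y $ l" by (simp add: Wc)
    then show "\<exists>s. f (P x' y) - f (P x y) = s *\<^sub>R (P x' y - P x y)"
      using H3 Wbox[OF h(1,3)] Wbox[OF h(2,3)] unfolding P_def by blast
  qed
  have H3j: "\<And>x y y'. x \<in> Si \<Longrightarrow> y \<in> Sj \<Longrightarrow> y' \<in> Sj \<Longrightarrow> \<exists>s. f (P x y') - f (P x y) = s *\<^sub>R (P x y' - P x y)"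
  proof -
    fix x y y' assume h: "x \<in> Si" "y \<in> Sj" "y' \<in> Sj"
    have "\<forall>l. l \<noteq> j \<longrightarrow> W x y' $ l = W x y $ l" by (simp add: Wc)
    then show "\<exists>s. f (P x y') - f (P x y) = s *\<^sub>R (P x y' - P x y)"
      using H3 Wbox[OF h(1,2)] Wbox[OF h(1,3)] unfolding P_def by blast
  qed
  have rect: "\<And>x y \<sigma> \<tau>. x \<in> Si \<Longrightarrow> y \<in> Sj \<Longrightarrow> x \<noteq> x0 \<Longrightarrow> y \<noteq> y0 \<Longrightarrow>
      P x0 y - A \<notin> span {P x y0 - A, P x y - P x y0} \<Longrightarrow>
      f (P x y0) - f A = \<sigma> *\<^sub>R (P x y0 - A) \<Longrightarrow> f (P x0 y) - f A = \<tau> *\<^sub>R (P x0 y - A) \<Longrightarrow>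
      \<sigma> = \<tau> \<and> f (P x y) - f A = \<tau> *\<^sub>R (P x y - A)"
  proof -
    fix x y \<sigma> \<tau> assume h: "x \<in> Si" "y \<in> Sj" "x \<noteq> x0" "y \<noteq> y0"
      "P x0 y - A \<notin> span {P x y0 - A, P x y - P x y0}"
      "f (P x y0) - f A = \<sigma> *\<^sub>R (P x y0 - A)" "f (P x0 y) - f A = \<tau> *\<^sub>R (P x0 y - A)"
    obtain \<kappa> where k: "f (P x y) - f (P x0 y) = \<kappa> *\<^sub>R (P x y - P x0 y)" using H3i[OF x0S h(1) h(2)] by blast
    obtain \<rho> where r: "f (P x y) - f (P x y0) = \<rho> *\<^sub>R (P x y - P x y0)" using H3j[OF h(1) y0S h(2)] by blast
    have L: "lin2 (P x y0 - A) (P x y - P x y0)" unfolding A_eq using pair[OF x0S h(1) y0S h(2)] h(3,4) by auto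
    define av where "av = P x y0 - A"
    define cv where "cv = P x y - P x y0"
    define bv where "bv = P x0 y - A"
    have top: "P x y - P x0 y = av + cv - bv" unfolding av_def cv_def bv_def by simp
    have e1: "f (P x y) - f A = \<kappa> *\<^sub>R (av + cv - bv) + \<tau> *\<^sub>R bv"
    proof -
      have "f (P x y) - f A = (f (P x y) - f (P x0 y)) + (f (P x0 y) - f A)" by simp
      also have "\<dots> = \<kappa> *\<^sub>R (P x y - P x0 y) + \<tau> *\<^sub>R (P x0 y - A)" using k h(7) by simp
      finally show ?thesis unfolding top bv_def .
    qed
    have e2: "f (P x y) - f A = \<rho> *\<^sub>R cv + \<sigma> *\<^sub>R av"
    proof -
      have "f (P x y) - f A = (f (P x y) - f (P x y0)) + (f (P x y0) - f A)" by simp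
      also have "\<dots> = \<rho> *\<^sub>R (P x y - P x y0) + \<sigma> *\<^sub>R (P x y0 - A)" using r h(6) by simp
      finally show ?thesis unfolding av_def cv_def .
    qed
    have key: "(\<kappa> - \<sigma>) *\<^sub>R av + (\<kappa> - \<rho>) *\<^sub>R cv = (\<kappa> - \<tau>) *\<^sub>R bv"
    proof -
      have "\<kappa> *\<^sub>R (av + cv - bv) + \<tau> *\<^sub>R bv = \<rho> *\<^sub>R cv + \<sigma> *\<^sub>R av" using e1 e2 by simp
      then show ?thesis by (simp add: algebra_simps)
    qed
    have kt: "\<kappa> = \<tau>"
    proof (rule ccontr)
      assume "\<kappa> \<noteq> \<tau>"
      then have "bv = (1 / (\<kappa> - \<tau>)) *\<^sub>R ((\<kappa> - \<sigma>) *\<^sub>R av + (\<kappa> - \<rho>) *\<^sub>R cv)"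
        unfolding key by simp
      moreover have "(1 / (\<kappa> - \<tau>)) *\<^sub>R ((\<kappa> - \<sigma>) *\<^sub>R av + (\<kappa> - \<rho>) *\<^sub>R cv) \<in> span {av, cv}"
        by (intro span_scale span_add span_base) auto
      ultimately have "bv \<in> span {av, cv}" by simp
      then show False using h(5) unfolding av_def bv_def cv_def by simp
    qed
    have "(\<kappa> - \<sigma>) *\<^sub>R av + (\<kappa> - \<rho>) *\<^sub>R cv = 0" using key kt by simp
    then have "\<kappa> - \<sigma> = 0 \<and> \<kappa> - \<rho> = 0" using L unfolding lin2_def av_def cv_def by blast
    then have "\<sigma> = \<tau>" "\<rho> = \<tau>" using kt by auto
    moreover have "f (P x y) - f A = \<tau> *\<^sub>R (P x y - A)"
      using e2 \<open>\<sigma> = \<tau>\<close> \<open>\<rho> = \<tau>\<close> unfolding av_def cv_def by (simp add: algebra_simps)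
    ultimately show "\<sigma> = \<tau> \<and> f (P x y) - f A = \<tau> *\<^sub>R (P x y - A)" by simp
  qed

  have u1: "P x1 y1 \<in> \<Omega>" "w (P x1 y1) = W x1 y1" using PE[OF x1S y1S] by auto
  have DU1: "(uw has_derivative DU (W x1 y1)) (at (W x1 y1))" using DU u1 by (metis imageI)
  have Df1: "(f has_derivative Df (P x1 y1)) (at (uw (W x1 y1)))" using f_deriv u1 unfolding P_def by auto
  have linDf: "linear (Df (P x1 y1))" using f_deriv u1 has_derivative_bounded_linear bounded_linear.linear by blast
  have eig: "\<And>k. DU (W x1 y1) (axis k 1) \<noteq> 0 \<and> Df (P x1 y1) (DU (W x1 y1) (axis k 1)) = lam k (P x1 y1) *\<^sub>R DU (W x1 y1) (axis k 1)"
  proof -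
    fix k
    show "DU (W x1 y1) (axis k 1) \<noteq> 0 \<and> Df (P x1 y1) (DU (W x1 y1) (axis k 1)) = lam k (P x1 y1) *\<^sub>R DU (W x1 y1) (axis k 1)"
    proof (rule eigen_dir[where \<Omega>=\<Omega> and u="P x1 y1" and w=w and uw=uw and Dw="Dw (P x1 y1)" and DU="DU (W x1 y1)" and k=k and r="r k (P x1 y1)"])
      show "(uw has_derivative DU (W x1 y1)) (at (w (P x1 y1)))" using DU1 u1 by simp
    qed (use open_\<Omega> u1 uw_w w_deriv H2 eigen linDf in auto)
  qed
  have abi: "a $ i < b $ i" using x0S x1S x01 unfolding Si_def by auto
  have abj: "a $ j < b $ j" using y0S y1S y01 unfolding Sj_def by auto
  have main_span: "P x0 y1 - A \<in> span {P x1 y0 - A, P x1 y1 - P x1 y0}"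
  proof (rule ccontr)
    assume NP: "P x0 y1 - A \<notin> span {P x1 y0 - A, P x1 y1 - P x1 y0}"
    obtain \<tau>0 where t0: "f (P x0 y1) - f A = \<tau>0 *\<^sub>R (P x0 y1 - A)" using H3j[OF x0S y0S y1S] A_eq by auto
    obtain \<sigma>0 where s0: "f (P x1 y0) - f A = \<sigma>0 *\<^sub>R (P x1 y0 - A)" using H3i[OF x0S x1S y0S] A_eq by auto
    have R11: "\<sigma>0 = \<tau>0 \<and> f (P x1 y1) - f A = \<tau>0 *\<^sub>R (P x1 y1 - A)"
      using rect[OF x1S y1S x01[symmetric] y01[symmetric] NP s0 t0] .
    have cst: "\<And>t s. f (P t y1) - f A = s *\<^sub>R (P t y1 - A) \<Longrightarrow> f (P x1 y1) - f A = s *\<^sub>R (P x1 y1 - A) \<Longrightarrow>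
        f (P t y1) - s *\<^sub>R P t y1 = f (P x1 y1) - s *\<^sub>R P x1 y1"
      using cst_lemma by metis
    have cst2: "\<And>t s. f (P x1 t) - f A = s *\<^sub>R (P x1 t - A) \<Longrightarrow> f (P x1 y1) - f A = s *\<^sub>R (P x1 y1 - A) \<Longrightarrow>
        f (P x1 t) - s *\<^sub>R P x1 t = f (P x1 y1) - s *\<^sub>R P x1 y1"
      using cst_lemma by metis
    have Lx: "lin2 (P x1 y0 - A) (P x1 y1 - P x1 y0)" unfolding A_eq using pair[OF x0S x1S y0S y1S x01 y01] .
    obtain d1 where d1: "d1 > 0" "\<forall>t\<in>Si. dist t x1 < d1 \<longrightarrow> P x0 y1 - A \<notin> span {P t y0 - A, P t y1 - P t y0}"
    proof -
      have c1: "continuous_on Si (\<lambda>t. P t y0 - A)" using Pcx[OF y0S] by (intro continuous_intros)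
      have c2: "continuous_on Si (\<lambda>t. P t y1 - P t y0)" using Pcx[OF y0S] Pcx[OF y1S] by (intro continuous_intros)
      have c3: "continuous_on Si (\<lambda>t. P x0 y1 - A)" by (intro continuous_intros)
      show ?thesis using nonplanar_open[OF c1 c2 c3 x1S Lx NP] that by blast
    qed
    define dx where "dx = min d1 \<bar>x1 - x0\<bar>"
    have dx0: "dx > 0" unfolding dx_def using d1 x01 by auto
    have lx: "lam i (P x1 y1) = \<tau>0"
    proof (rule curve_speed[where a=a and k=i and b=b and om="W x1 y1" and uw=uw and DU="DU (W x1 y1)" and f=f and Dfu="Df (P x1 y1)" and d=dx])
      show "a $ i < b $ i" by (rule abi)
      show "W x1 y1 $ i \<in> {a $ i..b $ i}" using x1S unfolding Si_def by (simp add: Wc)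
      show "(uw has_derivative DU (W x1 y1)) (at (W x1 y1))" by (rule DU1)
      show "(f has_derivative Df (P x1 y1)) (at (uw (W x1 y1)))" by (rule Df1)
      show "DU (W x1 y1) (axis i 1) \<noteq> 0" using eig by blast
      show "Df (P x1 y1) (DU (W x1 y1) (axis i 1)) = lam i (P x1 y1) *\<^sub>R DU (W x1 y1) (axis i 1)" using eig by blast
      show "dx > 0" by (rule dx0)
      show "\<forall>t\<in>{a $ i..b $ i}. dist t (W x1 y1 $ i) < dx \<longrightarrow>
        f (uw (vupd (W x1 y1) i t)) - \<tau>0 *\<^sub>R uw (vupd (W x1 y1) i t) = f (uw (W x1 y1)) - \<tau>0 *\<^sub>R uw (W x1 y1)"
      proof (intro ballI impI)
        fix t assume t: "t \<in> {a $ i..b $ i}" "dist t (W x1 y1 $ i) < dx"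
        have tS: "t \<in> Si" using t unfolding Si_def by simp
        have tx1: "dist t x1 < d1" and tx0: "t \<noteq> x0" using t unfolding dx_def by (auto simp: Wc dist_real_def)
        have vu: "vupd (W x1 y1) i t = W t y1" unfolding vec_eq_iff vupd_def by (simp add: Wc)
        obtain \<sigma>t where st: "f (P t y0) - f A = \<sigma>t *\<^sub>R (P t y0 - A)" using H3i[OF x0S tS y0S] A_eq by auto
        have "f (P t y1) - f A = \<tau>0 *\<^sub>R (P t y1 - A)"
          using rect[OF tS y1S tx0 y01[symmetric] _ st t0] d1 tS tx1 by blast
        then have "f (P t y1) - \<tau>0 *\<^sub>R P t y1 = f (P x1 y1) - \<tau>0 *\<^sub>R P x1 y1" using cst R11 by blast
        then show "f (uw (vupd (W x1 y1) i t)) - \<tau>0 *\<^sub>R uw (vupd (W x1 y1) i t) = f (uw (W x1 y1)) - \<tau>0 *\<^sub>R uw (W x1 y1)"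
          unfolding vu P_def .
      qed
    qed
    obtain d2 where d2: "d2 > 0" "\<forall>t\<in>Sj. dist t y1 < d2 \<longrightarrow> P x0 t - A \<notin> span {P x1 y0 - A, P x1 t - P x1 y0}"
    proof -
      have c1: "continuous_on Sj (\<lambda>t. P x1 y0 - A)" by (intro continuous_intros)
      have c2: "continuous_on Sj (\<lambda>t. P x1 t - P x1 y0)" using Pcy[OF x1S] by (intro continuous_intros)
      have c3: "continuous_on Sj (\<lambda>t. P x0 t - A)" using Pcy[OF x0S] by (intro continuous_intros)
      show ?thesis using nonplanar_open[OF c1 c2 c3 y1S Lx NP] that by blast
    qed
    define dy where "dy = min d2 \<bar>y1 - y0\<bar>"
    have dy0: "dy > 0" unfolding dy_def using d2 y01 by auto
    have ly: "lam j (P x1 y1) = \<sigma>0"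
    proof (rule curve_speed[where a=a and k=j and b=b and om="W x1 y1" and uw=uw and DU="DU (W x1 y1)" and f=f and Dfu="Df (P x1 y1)" and d=dy])
      show "a $ j < b $ j" by (rule abj)
      show "W x1 y1 $ j \<in> {a $ j..b $ j}" using y1S ji unfolding Sj_def by (simp add: Wc)
      show "(uw has_derivative DU (W x1 y1)) (at (W x1 y1))" by (rule DU1)
      show "(f has_derivative Df (P x1 y1)) (at (uw (W x1 y1)))" by (rule Df1)
      show "DU (W x1 y1) (axis j 1) \<noteq> 0" using eig by blast
      show "Df (P x1 y1) (DU (W x1 y1) (axis j 1)) = lam j (P x1 y1) *\<^sub>R DU (W x1 y1) (axis j 1)" using eig by blast
      show "dy > 0" by (rule dy0)
      show "\<forall>t\<in>{a $ j..b $ j}. dist t (W x1 y1 $ j) < dy \<longrightarrow>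
        f (uw (vupd (W x1 y1) j t)) - \<sigma>0 *\<^sub>R uw (vupd (W x1 y1) j t) = f (uw (W x1 y1)) - \<sigma>0 *\<^sub>R uw (W x1 y1)"
      proof (intro ballI impI)
        fix t assume t: "t \<in> {a $ j..b $ j}" "dist t (W x1 y1 $ j) < dy"
        have tS: "t \<in> Sj" using t unfolding Sj_def by simp
        have ty1: "dist t y1 < d2" and ty0: "t \<noteq> y0" using t ji unfolding dy_def by (auto simp: Wc dist_real_def)
        have vu: "vupd (W x1 y1) j t = W x1 t" unfolding vec_eq_iff vupd_def using ji by (simp add: Wc)
        obtain \<tau>t where tt: "f (P x0 t) - f A = \<tau>t *\<^sub>R (P x0 t - A)" using H3j[OF x0S y0S tS] A_eq by auto
        have "\<sigma>0 = \<tau>t \<and> f (P x1 t) - f A = \<tau>t *\<^sub>R (P x1 t - A)"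
          using rect[OF x1S tS x01[symmetric] ty0 _ s0 tt] d2 tS ty1 by blast
        then have "f (P x1 t) - f A = \<sigma>0 *\<^sub>R (P x1 t - A)" by simp
        moreover have "f (P x1 y1) - f A = \<sigma>0 *\<^sub>R (P x1 y1 - A)" using R11 by simp
        ultimately have "f (P x1 t) - \<sigma>0 *\<^sub>R P x1 t = f (P x1 y1) - \<sigma>0 *\<^sub>R P x1 y1" using cst2 by blast
        then show "f (uw (vupd (W x1 y1) j t)) - \<sigma>0 *\<^sub>R uw (vupd (W x1 y1) j t) = f (uw (W x1 y1)) - \<sigma>0 *\<^sub>R uw (W x1 y1)"
          unfolding vu P_def .
      qed
    qed
    have "lam i (P x1 y1) < lam j (P x1 y1)" using strict_hyp u1 ij by blast
    then show False using lx ly R11 by simp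
  qed
  define a1 where "a1 = P x1 y0 - A"
  define c1 where "c1 = P x1 y1 - P x1 y0"
  define sj where "sj = P x0 y1 - A"
  define si where "si = P x1 y1 - P x0 y1"
  obtain \<alpha> \<beta> where ab: "sj = \<alpha> *\<^sub>R a1 + \<beta> *\<^sub>R c1" using main_span unfolding span2_iff a1_def c1_def sj_def by blast
  have si_eq: "si = (1 - \<alpha>) *\<^sub>R a1 + (1 - \<beta>) *\<^sub>R c1"
  proof -
    have "si = a1 + c1 - sj" unfolding si_def a1_def c1_def sj_def by simp
    then show ?thesis unfolding ab by (simp add: algebra_simps)
  qed
  have L2: "lin2 (- si) (- sj)" using pair[OF x1S x0S y1S y0S x01[symmetric] y01[symmetric]]
    unfolding si_def sj_def A_eq by (simp add: algebra_simps)
  have anb: "\<alpha> \<noteq> \<beta>"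
  proof
    assume e: "\<alpha> = \<beta>"
    have "\<alpha> *\<^sub>R (- si) + (- (1 - \<alpha>)) *\<^sub>R (- sj) = 0"
      unfolding si_eq ab e by (simp add: algebra_simps)
    then have "\<alpha> = 0 \<and> - (1 - \<alpha>) = 0" using L2 unfolding lin2_def by blast
    then show False by linarith
  qed
  have a1e: "a1 = (1 / (\<alpha> - \<beta>)) *\<^sub>R ((1 - \<beta>) *\<^sub>R sj - \<beta> *\<^sub>R si)"
  proof -
    have "(1 - \<beta>) *\<^sub>R sj - \<beta> *\<^sub>R si = (\<alpha> - \<beta>) *\<^sub>R a1"
      unfolding si_eq ab by (simp add: algebra_simps)
    then show ?thesis using anb by simp
  qed
  have c1e: "c1 = (1 / (\<alpha> - \<beta>)) *\<^sub>R (\<alpha> *\<^sub>R si - (1 - \<alpha>) *\<^sub>R sj)"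
  proof -
    have "\<alpha> *\<^sub>R si - (1 - \<alpha>) *\<^sub>R sj = (\<alpha> - \<beta>) *\<^sub>R c1"
      unfolding si_eq ab by (simp add: algebra_simps)
    then show ?thesis using anb by simp
  qed
  have "span {sj, si} = span {a1, c1}"
  proof (rule span2_eqI)
    show "sj \<in> span {a1, c1}" unfolding span2_iff using ab by blast
    show "si \<in> span {a1, c1}" unfolding span2_iff using si_eq by blast
    show "a1 \<in> span {sj, si}" unfolding a1e by (intro span_scale span_diff span_base) auto
    show "c1 \<in> span {sj, si}" unfolding c1e by (intro span_scale span_diff span_base) auto
  qed
  moreover have "um - ul = sj" "ur - um = si" "uw (omega_le (w ul) (w ur) i) - ul = a1"
    "ur - uw (omega_le (w ul) (w ur) i) = c1"
    unfolding us_eq unfolding sj_def si_def a1_def c1_def um_eq ur_eq A_def[symmetric] by auto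
  ultimately show ?thesis by simp
qed

end
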